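(* Let $\mathbf{c}=\mathbf{a}+\mathbf{b}$. For every homogeneous polynomial $w\in\mathbb{Z}\langle \mathbf{a},\mathbf{b}\rangle$ of degree $n$ the following identities hold in $\mathbb{Z}[q]$: \begin{align*} \Theta(w\cdot \mathbf{c}) &= (1+q^{n+1})\cdot\Theta(w),\\ \Theta(G(w)) &= q\cdot [n]\cdot \Theta(w),\\ \Theta(\mathrm{Pyr}(w)) &= [n+2]\cdot\Theta(w),\\ \Theta(\mathrm{Bipyr}(w)) &= [2]\cdot[n+1]\cdot\Theta(w). \end{align*}
   Context: $\mathbb{Z}\langle \mathbf{a},\mathbf{b}\rangle$ is the ring of polynomials in the non-commuting variables $\mathbf{a},\mathbf{b}$. The Major MacMahon map $\Theta:\mathbb{Z}\langle \mathbf{a},\mathbf{b}\rangle\to\mathbb{Z}[q]$ is the $\mathbb{Z}$-linear map defined on monomials $w=u_1u_2\cdots u_n$ (each $u_i\in\{\mathbf{a},\mathbf{b}\}$) by $\Theta(w)=\prod_{i:\,u_i=\mathbf{b}} q^{i}$ (so $\Theta(1)=1$). For $m\ge 0$, $[m]=1+q+\cdots+q^{m-1}$ (so $[0]=0$). $G$ and $D$ are the derivations of $\mathbb{Z}\langle \mathbf{a},\mathbf{b}\rangle$ (linear maps satisfying $X(uv)=X(u)v+uX(v)$) determined by $G(\mathbf{a})=\mathbf{b}\mathbf{a}$, $G(\mathbf{b})=\mathbf{a}\mathbf{b}$, $D(\mathbf{a})=D(\mathbf{b})=\mathbf{a}\mathbf{b}+\mathbf{b}\mathbf{a}$, and $G(1)=D(1)=0$.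 The pyramid and bipyramid operators are the linear maps $\mathrm{Pyr}(w)=G(w)+w\cdot\mathbf{c}$ and $\mathrm{Bipyr}(w)=D(w)+\mathbf{c}\cdot w$. *)

theory Defs
  imports "HOL-Library.Poly_Mapping" "HOL-Computational_Algebra.Polynomial"
begin

text \<open>Words in the letters a, b are encoded as bool lists: False = a, True = b.
Elements of Z<a,b> are finitely supported integer combinations of words.\<close>

type_synonym ncword = "bool list"
type_synonym ncpoly = "ncword \<Rightarrow>\<^sub>0 int"

definition ncA :: ncpoly where "ncA = frag_of [False]"
definition ncB :: ncpoly where "ncB = frag_of [True]"
definition ncC :: ncpoly where "ncC = ncA + ncB"

definition ncmult :: "ncpoly \<Rightarrow> ncpoly \<Rightarrow> ncpoly" where
  "ncmult p r = frag_extend (\<lambda>u. frag_extend (\<lambda>v. frag_of (u @ v)) r) p"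

definition homogeneous :: "nat \<Rightarrow> ncpoly \<Rightarrow> bool" where
  "homogeneous n p \<longleftrightarrow> (\<forall>u\<in>Poly_Mapping.keys p. length u = n)"

definition theta_word :: "ncword \<Rightarrow> int poly" where
  "theta_word u = monom 1 (\<Sum>i\<in>{i. i < length u \<and> u ! i}. Suc i)"

definition Theta :: "ncpoly \<Rightarrow> int poly" where
  "Theta p = (\<Sum>u\<in>Poly_Mapping.keys p. smult (Poly_Mapping.lookup p u) (theta_word u))"

definition qint :: "nat \<Rightarrow> int poly" where
  "qint m = (\<Sum>k<m. monom 1 k)"

definition G_word :: "ncword \<Rightarrow> ncpoly" where
  "G_word u = (\<Sum>i<length u. frag_of (take i u @ (if u ! i then [False, True] else [True, False]) @ drop (Suc i) u))"

definition D_word :: "ncword \<Rightarrow> ncpoly" where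
  "D_word u = (\<Sum>i<length u. frag_of (take i u @ [False, True] @ drop (Suc i) u)
                          + frag_of (take i u @ [True, False] @ drop (Suc i) u))"

definition ncG :: "ncpoly \<Rightarrow> ncpoly" where "ncG = frag_extend G_word"
definition ncD :: "ncpoly \<Rightarrow> ncpoly" where "ncD = frag_extend D_word"

definition Pyr :: "ncpoly \<Rightarrow> ncpoly" where "Pyr w = ncG w + ncmult w ncC"
definition Bipyr :: "ncpoly \<Rightarrow> ncpoly" where "Bipyr w = ncD w + ncmult ncC w"

end

theory Submission
  imports Defs
begin

abbreviation XX :: "int poly" where "XX \<equiv> [:0, 1:]"

lemma monomX: "monom (1::int) k = XX ^ k"
  by (simp add: monom_altdef)

lemma qint_Suc: "qint (Suc m) = qint m + XX ^ m"
  by (simp add: qint_def monomX)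

lemma qint_0: "qint 0 = 0" by (simp add: qint_def)

lemma qint_Suc': "qint (Suc m) = 1 + XX * qint m"
proof (induction m)
  case 0 then show ?case by (simp add: qint_def)
next
  case (Suc m)
  have "qint (Suc (Suc m)) = qint (Suc m) + XX ^ Suc m" by (rule qint_Suc)
  also have "\<dots> = 1 + XX * (qint m + XX ^ m)" using Suc by (simp add: algebra_simps)
  finally show ?case by (simp add: qint_Suc)
qed

lemma frag_extend_zero_fun [simp]: "frag_extend (\<lambda>u. 0) x = 0"
  by (rule frag_extend_eq_0) simp

lemma Theta_superset:
  assumes "finite S" "Poly_Mapping.keys p \<subseteq> S"
  shows "Theta p = (\<Sum>u\<in>S. smult (Poly_Mapping.lookup p u) (theta_word u))"
  unfolding Theta_def
  by (rule sum.mono_neutral_left) (use assms in \<open>auto simp: in_keys_iff\<close>)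

lemma Theta_add: "Theta (a + b) = Theta a + Theta b"
proof -
  let ?S = "Poly_Mapping.keys a \<union> Poly_Mapping.keys b"
  have f: "finite ?S" by simp
  have "Theta (a+b) = (\<Sum>u\<in>?S. smult (Poly_Mapping.lookup (a+b) u) (theta_word u))"
    by (rule Theta_superset[OF f]) (simp add: keys_add)
  also have "\<dots> = (\<Sum>u\<in>?S. smult (Poly_Mapping.lookup a u) (theta_word u))
                 + (\<Sum>u\<in>?S. smult (Poly_Mapping.lookup b u) (theta_word u))"
    by (simp add: lookup_add smult_add_left sum.distrib)
  also have "\<dots> = Theta a + Theta b"
    by (simp add: Theta_superset[OF f])
  finally show ?thesis .
qed

lemma Theta_0: "Theta 0 = 0" by (simp add: Theta_def)

lemma Theta_minus: "Theta (- a) = - Theta a"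
  by (metis Theta_0 Theta_add add_eq_0_iff2 add.right_inverse)

lemma Theta_diff: "Theta (a - b) = Theta a - Theta b"
  by (metis Theta_add Theta_minus diff_conv_add_uminus)

lemma Theta_of: "Theta (frag_of u) = theta_word u"
  by (simp add: Theta_def keys_frag_of)

lemma Theta_sum: "finite I \<Longrightarrow> Theta (\<Sum>i\<in>I. f i) = (\<Sum>i\<in>I. Theta (f i))"
  by (induction I rule: finite_induct) (simp_all add: Theta_0 Theta_add)

lemma theta_snoc:
  "theta_word (u @ [x]) = theta_word u * (if x then XX ^ Suc (length u) else 1)"
proof -
  have S: "{i. i < length (u@[x]) \<and> (u@[x]) ! i} =
     {i. i < length u \<and> u ! i} \<union> (if x then {length u} else {})"
    by (auto simp: nth_append less_Suc_eq)
  show ?thesis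
  proof (cases x)
    case True
    have "(\<Sum>i\<in>{i. i < length (u@[x]) \<and> (u@[x]) ! i}. Suc i) =
          (\<Sum>i\<in>{i. i < length u \<and> u ! i}. Suc i) + Suc (length u)"
      unfolding S using True by (subst sum.union_disjoint) auto
    then show ?thesis using True
      by (simp add: theta_word_def monomX power_add)
  next
    case False
    then show ?thesis unfolding theta_word_def S by simp
  qed
qed

lemma theta_nil: "theta_word [] = 1" by (simp add: theta_word_def)

lemma theta_single: "theta_word [x] = (if x then XX else 1)"
  using theta_snoc[of "[]" x] by (simp add: theta_nil)

definition tG :: "ncword \<Rightarrow> nat \<Rightarrow> ncword" where
  "tG u i = take i u @ (if u ! i then [False, True] else [True, False]) @ drop (Suc i) u"

lemma G_word_snoc:
  "G_word (u @ [x]) = (\<Sum>i<length u. frag_of (tG u i @ [x]))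
      + frag_of (u @ (if x then [False, True] else [True, False]))"
proof -
  have "G_word (u @ [x]) = (\<Sum>i<Suc (length u). frag_of (tG (u@[x]) i))"
    by (simp add: G_word_def tG_def)
  also have "\<dots> = (\<Sum>i<length u. frag_of (tG (u@[x]) i)) + frag_of (tG (u@[x]) (length u))"
    by simp
  also have "(\<Sum>i<length u. frag_of (tG (u@[x]) i)) = (\<Sum>i<length u. frag_of (tG u i @ [x]))"
    by (rule sum.cong) (auto simp: tG_def nth_append)
  also have "tG (u@[x]) (length u) = u @ (if x then [False, True] else [True, False])"
    by (simp add: tG_def)
  finally show ?thesis .
qed

lemma len_tG: "i < length u \<Longrightarrow> length (tG u i) = Suc (length u)"
  by (simp add: tG_def)

lemma Theta_G_word: "Theta (G_word u) = XX * qint (length u) * theta_word u"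
proof (induction u rule: rev_induct)
  case Nil
  then show ?case by (simp add: G_word_def Theta_0 qint_0)
next
  case (snoc x u)
  have G: "Theta (G_word u) = (\<Sum>i<length u. theta_word (tG u i))"
    by (simp add: G_word_def tG_def Theta_sum Theta_of)
  have "Theta (G_word (u@[x])) = (\<Sum>i<length u. theta_word (tG u i @ [x]))
        + theta_word (u @ (if x then [False, True] else [True, False]))"
    by (simp add: G_word_snoc Theta_add Theta_sum Theta_of)
  also have "(\<Sum>i<length u. theta_word (tG u i @ [x])) =
      (\<Sum>i<length u. theta_word (tG u i)) * (if x then XX ^ Suc (Suc (length u)) else 1)"
    by (simp add: theta_snoc len_tG sum_distrib_right)
  finally have e: "Theta (G_word (u@[x])) = XX * qint (length u) * theta_word u * (if x then XX ^ Suc (Suc (length u)) else 1)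
        + theta_word (u @ (if x then [False, True] else [True, False]))"
    using G snoc by simp
  show ?case
  proof (cases x)
    case True
    have t: "theta_word (u @ [False, True]) = theta_word u * XX ^ Suc (Suc (length u))"
      using theta_snoc[of "u@[False]" True] theta_snoc[of u False] by simp
    show ?thesis using e True
      by (simp add: t theta_snoc qint_Suc' algebra_simps)
  next
    case False
    have t: "theta_word (u @ [True, False]) = theta_word u * XX ^ Suc (length u)"
      using theta_snoc[of "u@[True]" False] theta_snoc[of u True] by simp
    show ?thesis using e False
      by (simp add: t theta_snoc qint_Suc algebra_simps)
  qed
qed

definition tD1 :: "ncword \<Rightarrow> nat \<Rightarrow> ncword" where
  "tD1 u i = take i u @ [False, True] @ drop (Suc i) u"
definition tD2 :: "ncword \<Rightarrow> nat \<Rightarrow> ncword" where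
  "tD2 u i = take i u @ [True, False] @ drop (Suc i) u"

lemma len_tD1: "i < length u \<Longrightarrow> length (tD1 u i) = Suc (length u)"
  by (simp add: tD1_def)
lemma len_tD2: "i < length u \<Longrightarrow> length (tD2 u i) = Suc (length u)"
  by (simp add: tD2_def)

lemma D_word_snoc:
  "D_word (u @ [x]) = (\<Sum>i<length u. frag_of (tD1 u i @ [x]) + frag_of (tD2 u i @ [x]))
      + (frag_of (u @ [False, True]) + frag_of (u @ [True, False]))"
proof -
  have "D_word (u @ [x]) = (\<Sum>i<Suc (length u). frag_of (tD1 (u@[x]) i) + frag_of (tD2 (u@[x]) i))"
    by (simp add: D_word_def tD1_def tD2_def)
  also have "\<dots> = (\<Sum>i<length u. frag_of (tD1 (u@[x]) i) + frag_of (tD2 (u@[x]) i))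
       + (frag_of (tD1 (u@[x]) (length u)) + frag_of (tD2 (u@[x]) (length u)))"
    by simp
  also have "(\<Sum>i<length u. frag_of (tD1 (u@[x]) i) + frag_of (tD2 (u@[x]) i))
     = (\<Sum>i<length u. frag_of (tD1 u i @ [x]) + frag_of (tD2 u i @ [x]))"
    by (rule sum.cong) (auto simp: tD1_def tD2_def nth_append)
  finally show ?thesis by (simp add: tD1_def tD2_def)
qed

lemma q2: "qint 2 = 1 + XX"
  using qint_Suc[of 1] qint_Suc[of 0] by (simp add: qint_0 numeral_2_eq_2)

lemma Theta_D_word:
  "Theta (D_word u) + theta_word (False # u) + theta_word (True # u)
     = qint 2 * qint (Suc (length u)) * theta_word u"
proof (induction u rule: rev_induct)
  case Nil
  then show ?case
    by (simp add: D_word_def Theta_0 theta_single theta_nil qint_def monomX numeral_2_eq_2)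
next
  case (snoc x u)
  let ?f = "(if x then XX ^ Suc (Suc (length u)) else 1)"
  have D: "Theta (D_word u) = (\<Sum>i<length u. theta_word (tD1 u i) + theta_word (tD2 u i))"
    by (simp add: D_word_def tD1_def tD2_def Theta_sum Theta_of Theta_add)
  have "Theta (D_word (u@[x])) = (\<Sum>i<length u. theta_word (tD1 u i @ [x]) + theta_word (tD2 u i @ [x]))
        + (theta_word (u @ [False, True]) + theta_word (u @ [True, False]))"
    by (simp add: D_word_snoc Theta_add Theta_sum Theta_of)
  also have "(\<Sum>i<length u. theta_word (tD1 u i @ [x]) + theta_word (tD2 u i @ [x])) =
      (\<Sum>i<length u. theta_word (tD1 u i) + theta_word (tD2 u i)) * ?f"
    unfolding sum_distrib_right
    by (rule sum.cong) (simp_all add: theta_snoc len_tD1 len_tD2 distrib_right)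
  finally have e: "Theta (D_word (u@[x])) = Theta (D_word u) * ?f
        + (theta_word (u @ [False, True]) + theta_word (u @ [True, False]))"
    using D by simp
  have t1: "theta_word (u @ [False, True]) = theta_word u * XX ^ Suc (Suc (length u))"
    using theta_snoc[of "u@[False]" True] theta_snoc[of u False] by simp
  have t2: "theta_word (u @ [True, False]) = theta_word u * XX ^ Suc (length u)"
    using theta_snoc[of "u@[True]" False] theta_snoc[of u True] by simp
  have c1: "theta_word (False # u @ [x]) = theta_word (False # u) * ?f"
    using theta_snoc[of "False # u" x] by simp
  have c2: "theta_word (True # u @ [x]) = theta_word (True # u) * ?f"
    using theta_snoc[of "True # u" x] by simp
  have "Theta (D_word (u@[x])) + theta_word (False # u @ [x]) + theta_word (True # u @ [x])
     = (Theta (D_word u) + theta_word (False # u) + theta_word (True # u)) * ?f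
       + theta_word u * XX ^ Suc (length u) * (1 + XX)"
    unfolding e c1 c2 t1 t2 by (simp add: algebra_simps)
  also have "\<dots> = qint 2 * qint (Suc (length u)) * theta_word u * ?f
       + theta_word u * XX ^ Suc (length u) * (1 + XX)"
    using snoc by simp
  also have "\<dots> = qint 2 * qint (Suc (length (u@[x]))) * theta_word (u@[x])"
  proof (cases x)
    case True
    have th: "theta_word (u@[x]) = theta_word u * XX ^ Suc (length u)" using True theta_snoc by simp
    have f: "?f = XX ^ Suc (Suc (length u))" using True by simp
    have l: "length (u@[x]) = Suc (length u)" by simp
    have qq: "qint (Suc (Suc (length u))) = 1 + XX * qint (Suc (length u))" by (rule qint_Suc')
    show ?thesis unfolding f unfolding th l qq q2 power_Suc by algebra
  next
    case False
    have th: "theta_word (u@[x]) = theta_word u" using False theta_snoc by simp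
    have f: "?f = 1" using False by simp
    have l: "length (u@[x]) = Suc (length u)" by simp
    have qq: "qint (Suc (Suc (length u))) = qint (Suc (length u)) + XX ^ Suc (length u)" by (rule qint_Suc)
    show ?thesis unfolding f unfolding th l qq q2 power_Suc by algebra
  qed
  finally show ?case by simp
qed

lemma ncmult_diff1: "ncmult (a - b) r = ncmult a r - ncmult b r"
  by (simp add: ncmult_def frag_extend_diff)

lemma ncmult_C_left: "ncmult ncC w = frag_extend (\<lambda>v. frag_of (False # v)) w + frag_extend (\<lambda>v. frag_of (True # v)) w"
  by (simp add: ncmult_def ncC_def ncA_def ncB_def frag_extend_add)

lemma ncmult_of_C: "ncmult (frag_of u) ncC = frag_of (u @ [False]) + frag_of (u @ [True])"
  by (simp add: ncmult_def ncC_def ncA_def ncB_def frag_extend_add)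

theorem mainTheorem1:
  fixes w :: ncpoly and n :: nat
  assumes "homogeneous n w"
  shows "Theta (ncmult w ncC) = (1 + monom 1 (n + 1)) * Theta w \<and>
         Theta (ncG w) = monom 1 1 * qint n * Theta w \<and>
         Theta (Pyr w) = qint (n + 2) * Theta w \<and>
         Theta (Bipyr w) = qint 2 * qint (n + 1) * Theta w"
proof -
  have keys: "Poly_Mapping.keys w \<subseteq> {u. length u = n}"
    using assms by (auto simp: homogeneous_def)
  have P: "Theta (ncmult w ncC) = (1 + monom 1 (n + 1)) * Theta w \<and>
         Theta (ncG w) = monom 1 1 * qint n * Theta w \<and>
         Theta (Bipyr w) = qint 2 * qint (n + 1) * Theta w"
    using keys
  proof (induction w rule: frag_induction)
    case zero
    then show ?case by (simp add: ncmult_def ncG_def Bipyr_def ncD_def Theta_0)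
  next
    case (one u)
    then have len: "length u = n" by simp
    have a: "Theta (ncmult (frag_of u) ncC) = (1 + monom 1 (n + 1)) * Theta (frag_of u)"
      by (simp add: ncmult_of_C Theta_add Theta_of theta_snoc len monomX algebra_simps)
    have b: "Theta (ncG (frag_of u)) = monom 1 1 * qint n * Theta (frag_of u)"
      by (simp add: ncG_def Theta_G_word Theta_of len monomX)
    have c: "Theta (Bipyr (frag_of u)) = qint 2 * qint (n + 1) * Theta (frag_of u)"
      using Theta_D_word[of u]
      by (simp add: Bipyr_def ncD_def ncmult_C_left Theta_add Theta_of len add.assoc)
    show ?case using a b c by blast
  next
    case (diff a b)
    have "Bipyr (a - b) = Bipyr a - Bipyr b"
      by (simp add: Bipyr_def ncD_def ncmult_C_left frag_extend_diff)
    then have e3: "Theta (Bipyr (a - b)) = Theta (Bipyr a) - Theta (Bipyr b)"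
      by (simp only: Theta_diff)
    have e2: "Theta (ncG (a - b)) = Theta (ncG a) - Theta (ncG b)"
      by (simp only: ncG_def frag_extend_diff Theta_diff)
    have e1: "Theta (ncmult (a - b) ncC) = Theta (ncmult a ncC) - Theta (ncmult b ncC)"
      by (simp only: ncmult_diff1 Theta_diff)
    show ?case unfolding e1 e2 e3 using diff
      by (auto simp: Theta_diff algebra_simps)
  qed
  have q: "qint (n + 2) = 1 + XX * (qint n + XX ^ n)"
    using qint_Suc'[of "Suc n"] qint_Suc[of n] by simp
  have "Theta (Pyr w) = Theta (ncG w) + Theta (ncmult w ncC)"
    by (simp only: Pyr_def Theta_add add.commute)
  also have "\<dots> = XX * qint n * Theta w + (1 + XX ^ (n + 1)) * Theta w"
    using P by (simp only: monomX power_one_right)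
  also have "\<dots> = qint (n + 2) * Theta w"
    unfolding q Suc_eq_plus1[symmetric] power_Suc by algebra
  finally have "Theta (Pyr w) = qint (n + 2) * Theta w" .
  with P show ?thesis by blast
qed

end
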